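(* Every finite quasigroup $\langle A;\cdot\rangle$ which is an Abelian algebra is a Hamiltonian algebra.
   Context: A quasigroup is here the algebra $\langle A;\cdot\rangle$ with one binary operation such that for all $a,b\in A$ there are unique $x,y\in A$ with $x\cdot a=b$ and $a\cdot y=b$; its subalgebras are the nonempty subsets closed under $\cdot$. A polynomial operation of an algebra is an operation obtained from a term by substituting elements of the algebra for some of its variables. An algebra is called Abelian if for every polynomial operation $t(x,y_1,\ldots,y_n)$ and all elements $u,v,c_1,\ldots,c_n,d_1,\ldots,d_n$ of the algebra, $t(u,c_1,\ldots,c_n)=t(u,d_1,\ldots,d_n)$ implies $t(v,c_1,\ldots,c_n)=t(v,d_1,\ldots,d_n)$. An algebra is called Hamiltonian if the universe of every subalgebra is an equivalence class (block) of some congruence of the algebra. *)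

theory Defs
  imports Main
begin

definition quasigroup :: "'a set \<Rightarrow> ('a \<Rightarrow> 'a \<Rightarrow> 'a) \<Rightarrow> bool" where
  "quasigroup A m \<longleftrightarrow>
     (\<forall>a\<in>A. \<forall>b\<in>A. m a b \<in> A) \<and>
     (\<forall>a\<in>A. \<forall>b\<in>A. (\<exists>!x. x \<in> A \<and> m x a = b) \<and> (\<exists>!y. y \<in> A \<and> m a y = b))"

datatype 'a pterm = Var nat | Const 'a | Mul "'a pterm" "'a pterm"

fun consts_of :: "'a pterm \<Rightarrow> 'a set" where
  "consts_of (Var i) = {}"
| "consts_of (Const c) = {c}"
| "consts_of (Mul s t) = consts_of s \<union> consts_of t"

fun peval :: "('a \<Rightarrow> 'a \<Rightarrow> 'a) \<Rightarrow> 'a pterm \<Rightarrow> (nat \<Rightarrow> 'a) \<Rightarrow> 'a" where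
  "peval m (Var i) e = e i"
| "peval m (Const c) e = c"
| "peval m (Mul s t) e = m (peval m s e) (peval m t e)"

text \<open>Abelian: for every polynomial t(x, y_1, ..., y_n) (variable 0 plays the role
of x, the remaining variables the role of the y's), t(u,c) = t(u,d) implies t(v,c) = t(v,d).\<close>
definition abelian_alg :: "'a set \<Rightarrow> ('a \<Rightarrow> 'a \<Rightarrow> 'a) \<Rightarrow> bool" where
  "abelian_alg A m \<longleftrightarrow>
     (\<forall>t. consts_of t \<subseteq> A \<longrightarrow>
        (\<forall>u\<in>A. \<forall>v\<in>A. \<forall>c d. (\<forall>i. c i \<in> A) \<longrightarrow> (\<forall>i. d i \<in> A) \<longrightarrow>
           peval m t (c(0 := u)) = peval m t (d(0 := u)) \<longrightarrow>
           peval m t (c(0 := v)) = peval m t (d(0 := v))))"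

definition subalgebra :: "'a set \<Rightarrow> ('a \<Rightarrow> 'a \<Rightarrow> 'a) \<Rightarrow> 'a set \<Rightarrow> bool" where
  "subalgebra A m B \<longleftrightarrow> B \<noteq> {} \<and> B \<subseteq> A \<and> (\<forall>a\<in>B. \<forall>b\<in>B. m a b \<in> B)"

definition congruence :: "'a set \<Rightarrow> ('a \<Rightarrow> 'a \<Rightarrow> 'a) \<Rightarrow> 'a rel \<Rightarrow> bool" where
  "congruence A m \<theta> \<longleftrightarrow> equiv A \<theta> \<and>
     (\<forall>a b c d. (a, b) \<in> \<theta> \<longrightarrow> (c, d) \<in> \<theta> \<longrightarrow> (m a c, m b d) \<in> \<theta>)"

definition hamiltonian_alg :: "'a set \<Rightarrow> ('a \<Rightarrow> 'a \<Rightarrow> 'a) \<Rightarrow> bool" where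
  "hamiltonian_alg A m \<longleftrightarrow>
     (\<forall>B. subalgebra A m B \<longrightarrow> (\<exists>\<theta>. congruence A m \<theta> \<and> B \<in> A // \<theta>))"

end

theory Submission
  imports Defs "HOL-Library.FuncSet"
begin

fun psubst :: "(nat \<Rightarrow> 'a pterm) \<Rightarrow> 'a pterm \<Rightarrow> 'a pterm" where
  "psubst \<sigma> (Var i) = \<sigma> i"
| "psubst \<sigma> (Const c) = Const c"
| "psubst \<sigma> (Mul s t) = Mul (psubst \<sigma> s) (psubst \<sigma> t)"

lemma peval_psubst: "peval m (psubst \<sigma> t) e = peval m t (\<lambda>i. peval m (\<sigma> i) e)"
  by (induct t) auto

lemma consts_psubst: "consts_of (psubst \<sigma> t) \<subseteq> consts_of t \<union> (\<Union>i. consts_of (\<sigma> i))"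
  by (induct t) auto

lemma peval_closed:
  "(\<forall>a\<in>S. \<forall>b\<in>S. m a b \<in> S) \<Longrightarrow> consts_of t \<subseteq> S \<Longrightarrow> (\<forall>i. e i \<in> S) \<Longrightarrow> peval m t e \<in> S"
  by (induct t) auto

fun itL :: "nat \<Rightarrow> 'a pterm \<Rightarrow> 'a pterm \<Rightarrow> 'a pterm" where
  "itL 0 a b = b" | "itL (Suc n) a b = Mul a (itL n a b)"
fun itR :: "nat \<Rightarrow> 'a pterm \<Rightarrow> 'a pterm \<Rightarrow> 'a pterm" where
  "itR 0 a b = b" | "itR (Suc n) a b = Mul (itR n a b) a"

lemma peval_itL: "peval m (itL n a b) e = (m (peval m a e) ^^ n) (peval m b e)"
  by (induct n) auto
lemma peval_itR: "peval m (itR n a b) e = ((\<lambda>z. m z (peval m a e)) ^^ n) (peval m b e)"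
  by (induct n) auto
lemma consts_itL: "consts_of (itL n a b) \<subseteq> consts_of a \<union> consts_of b"
  by (induct n) auto
lemma consts_itR: "consts_of (itR n a b) \<subseteq> consts_of a \<union> consts_of b"
  by (induct n) auto

lemma funpow_closed: "(\<forall>x\<in>S. g x \<in> S) \<Longrightarrow> x \<in> S \<Longrightarrow> (g ^^ n) x \<in> S"
  by (induct n) auto

lemma funpow_inj_on: "(\<forall>x\<in>S. g x \<in> S) \<Longrightarrow> inj_on g S \<Longrightarrow> inj_on (g ^^ n) S"
proof (induct n)
  case 0 then show ?case by simp
next
  case (Suc n)
  have "inj_on (g ^^ n) (g ` S)" using Suc by (meson image_subset_iff inj_on_subset)
  then show ?case unfolding funpow_Suc_right using Suc comp_inj_on by blast
qed

lemma fix_mult: "\<forall>y\<in>S. (g ^^ k) y = y \<Longrightarrow> \<forall>y\<in>S. (g ^^ (k * q)) y = y"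
proof -
  assume h: "\<forall>y\<in>S. (g ^^ k) y = y"
  have "\<forall>y\<in>S. ((g ^^ k) ^^ q) y = y"
  proof (induct q)
    case (Suc q) then show ?case using h by simp
  qed simp
  then show ?thesis by (simp add: funpow_mult)
qed

lemma perm_period:
  assumes fin: "finite S" and cl: "\<forall>x\<in>S. f x \<in> S" and inj: "inj_on f S"
  shows "\<exists>k>0. \<forall>y\<in>S. (f ^^ k) y = y"
proof -
  define g where "g i = restrict (f ^^ i) S" for i :: nat
  have "g ` UNIV \<subseteq> S \<rightarrow>\<^sub>E S" unfolding g_def using funpow_closed[OF cl] by auto
  moreover have "finite (S \<rightarrow>\<^sub>E S)" using fin by (simp add: finite_PiE)
  ultimately have "finite (g ` UNIV)" by (meson finite_subset)
  then have "\<not> inj g" using finite_imageD infinite_UNIV_nat by blast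
  then obtain i j where ij: "i \<noteq> j" "g i = g j" unfolding inj_def by blast
  then obtain i j where ij: "i < j" "g i = g j"
    by (metis linorder_neqE_nat)
  have ii: "inj_on (f ^^ i) S" using funpow_inj_on[OF cl inj] .
  have "\<forall>y\<in>S. (f ^^ (j - i)) y = y"
  proof
    fix y assume y: "y \<in> S"
    have "(f ^^ j) y = (f ^^ i) y" using ij(2) y unfolding g_def by (metis restrict_apply')
    moreover have "f ^^ j = f ^^ i \<circ> f ^^ (j - i)" using ij(1) by (simp add: funpow_add[symmetric])
    ultimately have "(f ^^ i) ((f ^^ (j - i)) y) = (f ^^ i) y" by simp
    then show "(f ^^ (j - i)) y = y" using ii y funpow_closed[OF cl y] by (meson inj_onD)
  qed
  then show ?thesis using ij(1) by (intro exI[of _ "j - i"]) auto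
qed

lemma uniform_period:
  assumes fin: "finite S" and h: "\<forall>a\<in>S. \<exists>k>0. \<forall>y\<in>S. (F a ^^ k) y = y"
  shows "\<exists>N>0. \<forall>a\<in>S. \<forall>y\<in>S. (F a ^^ N) y = y"
proof -
  obtain k where k: "\<forall>a\<in>S. k a > 0 \<and> (\<forall>y\<in>S. (F a ^^ k a) y = y)" using h by metis
  define N where "N = prod k S"
  have "N > 0" unfolding N_def using k by (simp add: prod_pos)
  moreover have "\<forall>a\<in>S. \<forall>y\<in>S. (F a ^^ N) y = y"
  proof (intro ballI)
    fix a y assume a: "a \<in> S" and y: "y \<in> S"
    have "k a dvd N" unfolding N_def using fin a by auto
    then obtain q where "N = k a * q" by blast
    then show "(F a ^^ N) y = y" using fix_mult[where g="F a" and k="k a" and q=q and S=S] k a y by auto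
  qed
  ultimately show ?thesis by blast
qed


definition mrg :: "nat set \<Rightarrow> (nat \<Rightarrow> 'a) \<Rightarrow> (nat \<Rightarrow> 'a) \<Rightarrow> nat \<Rightarrow> 'a" where
  "mrg X u c = (\<lambda>i. if i \<in> X then u i else c i)"

lemma tc_var:
  assumes ab: "abelian_alg A m" and s: "consts_of s \<subseteq> A"
    and c: "\<forall>j. c j \<in> A" and d: "\<forall>j. d j \<in> A" and u: "u \<in> A" and v: "v \<in> A"
    and eq: "peval m s (c(i:=u)) = peval m s (d(i:=u))"
  shows "peval m s (c(i:=v)) = peval m s (d(i:=v))"
proof -
  define \<rho> where "\<rho> j = (if j = i then 0 else if j = 0 then i else j)" for j :: nat
  define s' where "s' = psubst (\<lambda>j. Var (\<rho> j)) s"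
  have pe: "peval m s' e = peval m s (\<lambda>j. e (\<rho> j))" for e
    unfolding s'_def by (simp add: peval_psubst)
  have cs: "consts_of s' \<subseteq> A" unfolding s'_def using consts_psubst[of "\<lambda>j. Var (\<rho> j)" s] s by auto
  have key: "(\<lambda>j. ((f \<circ> \<rho>)(0 := w)) (\<rho> j)) = f(i := w)" for f :: "nat \<Rightarrow> 'a" and w
    unfolding \<rho>_def by (auto simp: fun_eq_iff)
  have "peval m s' ((c \<circ> \<rho>)(0:=u)) = peval m s' ((d \<circ> \<rho>)(0:=u))"
    using eq by (simp only: pe key)
  moreover have "\<forall>j. (c \<circ> \<rho>) j \<in> A" "\<forall>j. (d \<circ> \<rho>) j \<in> A" using c d by auto
  ultimately have "peval m s' ((c \<circ> \<rho>)(0:=v)) = peval m s' ((d \<circ> \<rho>)(0:=v))"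
    using ab cs u v unfolding abelian_alg_def by blast
  then show ?thesis by (simp only: pe key)
qed

lemma tc_gen:
  assumes fX: "finite X" and ab: "abelian_alg A m" and s: "consts_of s \<subseteq> A"
    and u: "\<forall>j. u j \<in> A" and v: "\<forall>j. v j \<in> A"
  shows "\<forall>c d. (\<forall>j. c j \<in> A) \<longrightarrow> (\<forall>j. d j \<in> A) \<longrightarrow>
     peval m s (mrg X u c) = peval m s (mrg X u d) \<longrightarrow> peval m s (mrg X v c) = peval m s (mrg X v d)"
  using fX
proof (induct X rule: finite_induct)
  case empty then show ?case by (simp add: mrg_def)
next
  case (insert i X)
  show ?case
  proof (intro allI impI)
    fix c d assume c: "\<forall>j. c j \<in> A" and d: "\<forall>j. d j \<in> A"
      and eq: "peval m s (mrg (insert i X) u c) = peval m s (mrg (insert i X) u d)"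
    have m1: "mrg (insert i X) w f = mrg X w (f(i := w i))" for w f
      using insert(2) by (auto simp: mrg_def fun_eq_iff)
    have m2: "mrg X w (f(i := z)) = (mrg X w f)(i := z)" for w f z
      using insert(2) by (auto simp: mrg_def fun_eq_iff)
    have "peval m s (mrg X v (c(i := u i))) = peval m s (mrg X v (d(i := u i)))"
      using insert(3) c d u eq unfolding m1 by simp
    then have "peval m s ((mrg X v c)(i := u i)) = peval m s ((mrg X v d)(i := u i))"
      by (simp only: m2)
    moreover have "\<forall>j. mrg X v c j \<in> A" "\<forall>j. mrg X v d j \<in> A" using c d v by (auto simp: mrg_def)
    ultimately have "peval m s ((mrg X v c)(i := v i)) = peval m s ((mrg X v d)(i := v i))"
      using tc_var[OF ab s] u v by blast
    then show "peval m s (mrg (insert i X) v c) = peval m s (mrg (insert i X) v d)"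
      by (simp only: m1 m2)
  qed
qed


locale fq =
  fixes A :: "'a set" and m :: "'a \<Rightarrow> 'a \<Rightarrow> 'a" and N :: nat
  assumes fin: "finite A" and cl: "\<forall>a\<in>A. \<forall>b\<in>A. m a b \<in> A"
    and NL: "\<forall>a\<in>A. \<forall>y\<in>A. (m a ^^ N) y = y"
    and NR: "\<forall>a\<in>A. \<forall>y\<in>A. ((\<lambda>z. m z a) ^^ N) y = y"
    and Npos: "N > 0"
begin

definition ldiv where "ldiv a b = (m a ^^ (N - 1)) b"
definition rdiv where "rdiv b a = ((\<lambda>z. m z a) ^^ (N - 1)) b"
definition P where "P x y z = m (rdiv x (ldiv y y)) (ldiv y z)"
definition pP where "pP a b c = Mul (itR (N-1) (itL (N-1) b b) a) (itL (N-1) b c)"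

lemma peval_pP: "peval m (pP a b c) e = P (peval m a e) (peval m b e) (peval m c e)"
  unfolding pP_def P_def ldiv_def rdiv_def by (simp add: peval_itL peval_itR)

lemma consts_pP: "consts_of (pP a b c) \<subseteq> consts_of a \<union> consts_of b \<union> consts_of c"
  unfolding pP_def using consts_itL consts_itR by fastforce

lemma sub_closed:
  assumes "\<forall>a\<in>S. \<forall>b\<in>S. m a b \<in> S"
  shows ldiv_cl: "a \<in> S \<Longrightarrow> b \<in> S \<Longrightarrow> ldiv a b \<in> S"
    and rdiv_cl: "a \<in> S \<Longrightarrow> b \<in> S \<Longrightarrow> rdiv b a \<in> S"
    and P_cl: "x \<in> S \<Longrightarrow> y \<in> S \<Longrightarrow> z \<in> S \<Longrightarrow> P x y z \<in> S"
proof -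
  show l: "a \<in> S \<Longrightarrow> b \<in> S \<Longrightarrow> ldiv a b \<in> S" for a b
    unfolding ldiv_def using assms by (intro funpow_closed) auto
  show r: "a \<in> S \<Longrightarrow> b \<in> S \<Longrightarrow> rdiv b a \<in> S" for a b
    unfolding rdiv_def using assms by (intro funpow_closed) auto
  show "x \<in> S \<Longrightarrow> y \<in> S \<Longrightarrow> z \<in> S \<Longrightarrow> P x y z \<in> S"
    unfolding P_def using l r assms by auto
qed

lemma NN: "N = Suc (N - 1)" using Npos by simp

lemma m_ldiv: "a \<in> A \<Longrightarrow> b \<in> A \<Longrightarrow> m a (ldiv a b) = b"
proof -
  assume "a \<in> A" "b \<in> A"
  then have "(m a ^^ Suc (N - 1)) b = b" using NL NN by metis
  then show ?thesis unfolding ldiv_def by simp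
qed

lemma rdiv_m: "a \<in> A \<Longrightarrow> b \<in> A \<Longrightarrow> rdiv (m b a) a = b"
proof -
  assume "a \<in> A" "b \<in> A"
  then have "((\<lambda>z. m z a) ^^ Suc (N - 1)) b = b" using NR NN by metis
  then show ?thesis unfolding rdiv_def funpow_Suc_right by simp
qed

lemma m_rdiv: "a \<in> A \<Longrightarrow> b \<in> A \<Longrightarrow> m (rdiv b a) a = b"
proof -
  assume "a \<in> A" "b \<in> A"
  then have "((\<lambda>z. m z a) ^^ Suc (N - 1)) b = b" using NR NN by metis
  then show ?thesis unfolding rdiv_def by simp
qed

lemma P_xxz: "x \<in> A \<Longrightarrow> z \<in> A \<Longrightarrow> P x x z = z"
proof -
  assume x: "x \<in> A" and z: "z \<in> A"
  have "ldiv x x \<in> A" using ldiv_cl[OF cl] x by auto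
  then have "rdiv x (ldiv x x) = x" using rdiv_m[of "ldiv x x" x] x m_ldiv[OF x x] by simp
  then show ?thesis unfolding P_def using m_ldiv[OF x z] by simp
qed

lemma P_xzz: "x \<in> A \<Longrightarrow> z \<in> A \<Longrightarrow> P x z z = x"
  unfolding P_def using m_rdiv ldiv_cl[OF cl] by simp

lemma P_inj: "y \<in> A \<Longrightarrow> z \<in> A \<Longrightarrow> inj_on (\<lambda>x. P x y z) A"
proof (rule inj_onI)
  fix x x' assume y: "y \<in> A" and z: "z \<in> A" and x: "x \<in> A" and x': "x' \<in> A"
    and eq: "P x y z = P x' y z"
  define w where "w = ldiv y y"
  define v where "v = ldiv y z"
  have w: "w \<in> A" and v: "v \<in> A" unfolding w_def v_def using ldiv_cl[OF cl] y z by auto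
  have "m (rdiv x w) v = m (rdiv x' w) v" using eq unfolding P_def w_def v_def .
  then have "rdiv x w = rdiv x' w"
    using rdiv_m[OF v] rdiv_cl[OF cl] w v x x' by metis
  then show "x = x'" using m_rdiv[OF w] x x' by metis
qed


definition rel :: "'a set \<Rightarrow> 'a rel" where
  "rel B = {(a,b). \<exists>t X e1 e2. consts_of t = {} \<and> finite X \<and> (\<forall>i. e1 i \<in> A) \<and> (\<forall>i. e2 i \<in> A)
     \<and> (\<forall>i\<in>X. e1 i \<in> B \<and> e2 i \<in> B) \<and> (\<forall>i. i \<notin> X \<longrightarrow> e1 i = e2 i)
     \<and> a = peval m t e1 \<and> b = peval m t e2}"

lemma rel_sub: "rel B \<subseteq> A \<times> A"
  unfolding rel_def using peval_closed[OF cl] by auto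

lemma rel_refl: "a \<in> A \<Longrightarrow> (a, a) \<in> rel B"
  unfolding rel_def mem_Collect_eq prod.case
  by (rule exI[of _ "Var 0"], rule exI[of _ "{}"], rule exI[of _ "\<lambda>_. a"], rule exI[of _ "\<lambda>_. a"]) simp

lemma rel_sym: assumes "(a, b) \<in> rel B" shows "(b, a) \<in> rel B"
proof -
  obtain t X e1 e2 where h: "consts_of t = {}" "finite X" "\<forall>i. e1 i \<in> A" "\<forall>i. e2 i \<in> A"
     "\<forall>i\<in>X. e1 i \<in> B \<and> e2 i \<in> B" "\<forall>i. i \<notin> X \<longrightarrow> e1 i = e2 i" "a = peval m t e1" "b = peval m t e2"
    using assms unfolding rel_def by blast
  show ?thesis unfolding rel_def mem_Collect_eq prod.case
    apply (rule exI[of _ t], rule exI[of _ X], rule exI[of _ e2], rule exI[of _ e1])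
    using h by auto
qed

definition ren1 :: "'a pterm \<Rightarrow> 'a pterm" where "ren1 t = psubst (\<lambda>j. Var (Suc (2*j))) t"
definition ren2 :: "'a pterm \<Rightarrow> 'a pterm" where "ren2 t = psubst (\<lambda>j. Var (Suc (Suc (2*j)))) t"
definition cmb :: "(nat \<Rightarrow> 'a) \<Rightarrow> (nat \<Rightarrow> 'a) \<Rightarrow> 'a \<Rightarrow> nat \<Rightarrow> 'a" where
  "cmb e f w j = (if j = 0 then w else if odd j then e ((j - 1) div 2) else f ((j - 2) div 2))"

lemma cmb_simps[simp]: "cmb e f w 0 = w" "cmb e f w (Suc (2*i)) = e i" "cmb e f w (Suc (Suc (2*i))) = f i"
  unfolding cmb_def by auto

lemma peval_ren: "peval m (ren1 t) (cmb e f w) = peval m t e" "peval m (ren2 t) (cmb e f w) = peval m t f"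
  unfolding ren1_def ren2_def by (simp_all add: peval_psubst)

lemma consts_ren: "consts_of t = {} \<Longrightarrow> consts_of (ren1 t) = {}" "consts_of t = {} \<Longrightarrow> consts_of (ren2 t) = {}"
  unfolding ren1_def ren2_def using consts_psubst[of "\<lambda>j. Var (Suc (2*j))" t] consts_psubst[of "\<lambda>j. Var (Suc (Suc (2*j)))" t]
  by auto

lemma nat_cases3: obtains "j = 0" | i where "j = Suc (2*i)" | i where "j = Suc (Suc (2*i))"
proof (cases "j = 0")
  case True then show ?thesis using that(1) by blast
next
  case False
  show ?thesis
  proof (cases "odd j")
    case True then have "j = Suc (2*(j div 2))" by presburger
    then show ?thesis using that(2) by blast
  next
    case False2: False
    then have "j = Suc (Suc (2*((j - 2) div 2)))" using False by presburger
    then show ?thesis using that(3) by blast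
  qed
qed

lemma rel_comb:
  assumes "(a, b) \<in> rel B" "(c, d) \<in> rel B" "w \<in> A"
  shows "\<exists>t1 t2 X E1 E2. consts_of t1 = {} \<and> consts_of t2 = {} \<and> finite X \<and> (\<forall>i. E1 i \<in> A) \<and> (\<forall>i. E2 i \<in> A)
     \<and> (\<forall>i\<in>X. E1 i \<in> B \<and> E2 i \<in> B) \<and> (\<forall>i. i \<notin> X \<longrightarrow> E1 i = E2 i) \<and> E1 0 = w \<and> E2 0 = w
     \<and> a = peval m t1 E1 \<and> b = peval m t1 E2 \<and> c = peval m t2 E1 \<and> d = peval m t2 E2"
proof -
  obtain t X e1 e2 where h1: "consts_of t = {}" "finite X" "\<forall>i. e1 i \<in> A" "\<forall>i. e2 i \<in> A"
     "\<forall>i\<in>X. e1 i \<in> B \<and> e2 i \<in> B" "\<forall>i. i \<notin> X \<longrightarrow> e1 i = e2 i" "a = peval m t e1" "b = peval m t e2"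
    using assms(1) unfolding rel_def by blast
  obtain t' X' f1 f2 where h2: "consts_of t' = {}" "finite X'" "\<forall>i. f1 i \<in> A" "\<forall>i. f2 i \<in> A"
     "\<forall>i\<in>X'. f1 i \<in> B \<and> f2 i \<in> B" "\<forall>i. i \<notin> X' \<longrightarrow> f1 i = f2 i" "c = peval m t' f1" "d = peval m t' f2"
    using assms(2) unfolding rel_def by blast
  define Y where "Y = (\<lambda>i. Suc (2*i)) ` X \<union> (\<lambda>i. Suc (Suc (2*i))) ` X'"
  have "\<forall>i. cmb e1 f1 w i \<in> A" "\<forall>i. cmb e2 f2 w i \<in> A"
    using h1 h2 assms(3) by (simp_all add: cmb_def)
  moreover have "\<forall>i\<in>Y. cmb e1 f1 w i \<in> B \<and> cmb e2 f2 w i \<in> B"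
    unfolding Y_def using h1 h2 by auto
  moreover have "cmb e1 f1 w i = cmb e2 f2 w i" if "i \<notin> Y" for i
    by (rule nat_cases3[of i]) (use h1 h2 that in \<open>auto simp: Y_def\<close>)
  then have "\<forall>i. i \<notin> Y \<longrightarrow> cmb e1 f1 w i = cmb e2 f2 w i" by blast
  moreover have "finite Y" unfolding Y_def using h1 h2 by auto
  moreover have "consts_of (ren1 t) = {}" "consts_of (ren2 t') = {}" using consts_ren h1(1) h2(1) by auto
  moreover have "a = peval m (ren1 t) (cmb e1 f1 w)" "b = peval m (ren1 t) (cmb e2 f2 w)"
      "c = peval m (ren2 t') (cmb e1 f1 w)" "d = peval m (ren2 t') (cmb e2 f2 w)"
    unfolding h1(7,8) h2(7,8) by (simp_all only: peval_ren)
  moreover have "cmb e1 f1 w 0 = w" "cmb e2 f2 w 0 = w" by simp_all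
  ultimately show ?thesis
    apply (rule_tac exI[of _ "ren1 t"], rule_tac exI[of _ "ren2 t'"], rule_tac exI[of _ Y], rule_tac exI[of _ "cmb e1 f1 w"], rule_tac exI[of _ "cmb e2 f2 w"])
    by (intro conjI) assumption+
qed

lemma rel_trans: assumes "(a, b) \<in> rel B" "(b, c) \<in> rel B" shows "(a, c) \<in> rel B"
proof -
  have bA: "b \<in> A" using assms rel_sub by auto
  obtain t1 t2 X E1 E2 where h: "consts_of t1 = {}" "consts_of t2 = {}" "finite X" "\<forall>i. E1 i \<in> A" "\<forall>i. E2 i \<in> A"
     "\<forall>i\<in>X. E1 i \<in> B \<and> E2 i \<in> B" "\<forall>i. i \<notin> X \<longrightarrow> E1 i = E2 i" "E1 0 = b" "E2 0 = b"
     "a = peval m t1 E1" "b = peval m t1 E2" "b = peval m t2 E1" "c = peval m t2 E2"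
    using rel_comb[OF assms bA] by blast
  have aA: "a \<in> A" and cA: "c \<in> A" using assms rel_sub by auto
  have "a = peval m (pP t1 (Var 0) t2) E1" using h aA bA by (simp add: peval_pP P_xzz)
  moreover have "c = peval m (pP t1 (Var 0) t2) E2" using h cA bA by (simp add: peval_pP P_xxz)
  moreover have "consts_of (pP t1 (Var 0) t2) = {}" using consts_pP[of t1 "Var 0" t2] h by auto
  ultimately show ?thesis unfolding rel_def mem_Collect_eq prod.case
    apply (rule_tac exI[of _ "pP t1 (Var 0) t2"], rule_tac exI[of _ X], rule_tac exI[of _ E1], rule_tac exI[of _ E2])
    using h by blast
qed

lemma rel_compat: assumes "(a, b) \<in> rel B" "(c, d) \<in> rel B" shows "(m a c, m b d) \<in> rel B"
proof -
  have aA: "a \<in> A" using assms rel_sub by auto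
  obtain t1 t2 X E1 E2 where h: "consts_of t1 = {}" "consts_of t2 = {}" "finite X" "\<forall>i. E1 i \<in> A" "\<forall>i. E2 i \<in> A"
     "\<forall>i\<in>X. E1 i \<in> B \<and> E2 i \<in> B" "\<forall>i. i \<notin> X \<longrightarrow> E1 i = E2 i" "E1 0 = a" "E2 0 = a"
     "a = peval m t1 E1" "b = peval m t1 E2" "c = peval m t2 E1" "d = peval m t2 E2"
    using rel_comb[OF assms aA] by blast
  have "m a c = peval m (Mul t1 t2) E1" "m b d = peval m (Mul t1 t2) E2" using h by auto
  moreover have "consts_of (Mul t1 t2) = {}" using h by auto
  ultimately show ?thesis unfolding rel_def mem_Collect_eq prod.case
    apply (rule_tac exI[of _ "Mul t1 t2"], rule_tac exI[of _ X], rule_tac exI[of _ E1], rule_tac exI[of _ E2])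
    using h by blast
qed

lemma rel_congruence: "congruence A m (rel B)"
proof -
  have "refl_on A (rel B)" unfolding refl_on_def using rel_refl by blast
  moreover have "sym (rel B)" unfolding sym_def using rel_sym by blast
  moreover have "trans (rel B)" unfolding trans_def using rel_trans by blast
  ultimately have "equiv A (rel B)" using rel_sub unfolding equiv_def by blast
  moreover have "\<forall>a b c d. (a, b) \<in> rel B \<longrightarrow> (c, d) \<in> rel B \<longrightarrow> (m a c, m b d) \<in> rel B"
    using rel_compat by blast
  ultimately show ?thesis unfolding congruence_def by blast
qed

lemma block:
  assumes ab: "abelian_alg A m" and sub: "subalgebra A m B" and r: "(a, b) \<in> rel B" and aB: "a \<in> B"
  shows "b \<in> B"
proof -
  obtain t X e1 e2 where h: "consts_of t = {}" "finite X" "\<forall>i. e1 i \<in> A" "\<forall>i. e2 i \<in> A"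
     "\<forall>i\<in>X. e1 i \<in> B \<and> e2 i \<in> B" "\<forall>i. i \<notin> X \<longrightarrow> e1 i = e2 i" "a = peval m t e1" "b = peval m t e2"
    using r unfolding rel_def by blast
  have BA: "B \<subseteq> A" and Bcl: "\<forall>x\<in>B. \<forall>y\<in>B. m x y \<in> B" and Bne: "B \<noteq> {}"
    using sub unfolding subalgebra_def by auto
  obtain b0 where b0: "b0 \<in> B" using Bne by blast
  define cc where "cc = (\<lambda>_::nat. b0)"
  define K where "K = peval m t (mrg X e1 cc)"
  define \<sigma> where "\<sigma> j = (if j \<in> X then Const (e1 j) else Var j)" for j
  define s where "s = pP t (psubst \<sigma> t) (Const K)"
  have \<sigma>ev: "(\<lambda>j. peval m (\<sigma> j) e) = mrg X e1 e" for e
    unfolding \<sigma>_def mrg_def by (auto simp: fun_eq_iff)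
  have sev: "peval m s e = P (peval m t e) (peval m t (mrg X e1 e)) K" for e
    unfolding s_def by (simp add: peval_pP peval_psubst \<sigma>ev)
  have m1B: "\<forall>j. mrg X e1 cc j \<in> B" "\<forall>j. mrg X e2 cc j \<in> B"
    using h(5) b0 unfolding mrg_def cc_def by auto
  have KB: "K \<in> B" unfolding K_def using peval_closed[OF Bcl] h(1) m1B by auto
  have KA: "K \<in> A" using KB BA by auto
  have ccA: "\<forall>j. cc j \<in> A" using b0 BA unfolding cc_def by auto
  have cs\<sigma>: "consts_of (\<sigma> j) \<subseteq> A" for j unfolding \<sigma>_def using h(3) by auto
  have "consts_of (psubst \<sigma> t) \<subseteq> A" using consts_psubst[of \<sigma> t] h(1) cs\<sigma> by blast
  then have cs: "consts_of s \<subseteq> A"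
    unfolding s_def using consts_pP[of t "psubst \<sigma> t" "Const K"] h(1) KA by auto
  have eqs: "mrg X e2 e1 = e2" "mrg X e1 e2 = e1" "mrg X e1 e1 = e1"
      "mrg X e1 (mrg X e1 cc) = mrg X e1 cc" "mrg X e1 (mrg X e2 cc) = mrg X e1 cc"
    using h(6) by (auto simp: mrg_def fun_eq_iff)
  have tA: "peval m t e \<in> A" if "\<forall>j. e j \<in> A" for e using peval_closed[OF cl] h(1) that by auto
  have "peval m s (mrg X e1 e1) = K"
    unfolding sev eqs using P_xxz tA h(3) KA by simp
  moreover have "peval m s (mrg X e1 cc) = K"
    unfolding sev eqs K_def[symmetric] using P_xxz KA by simp
  ultimately have hyp: "peval m s (mrg X e1 e1) = peval m s (mrg X e1 cc)" by simp
  have "peval m s (mrg X e2 e1) = peval m s (mrg X e2 cc)"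
    using tc_gen[OF h(2) ab cs h(3) h(4), rule_format, OF h(3)[rule_format] ccA[rule_format] hyp] .
  moreover have m2A: "\<forall>j. mrg X e2 cc j \<in> A" using m1B BA by auto
  ultimately have "P b a K = peval m t (mrg X e2 cc)"
    unfolding sev eqs K_def[symmetric] h(7,8)[symmetric] using P_xzz[OF tA[OF m2A] KA] by simp
  moreover have "peval m t (mrg X e2 cc) \<in> B" using peval_closed[OF Bcl] h(1) m1B by auto
  ultimately have PB: "P b a K \<in> B" by simp
  have aA: "a \<in> A" and bA: "b \<in> A" using r rel_sub by auto
  define g where "g x = P x a K" for x
  have injA: "inj_on g A" unfolding g_def using P_inj aA KA by simp
  have "g ` B \<subseteq> B" unfolding g_def using P_cl[OF Bcl] aB KB by auto
  moreover have "inj_on g B" using injA BA inj_on_subset by blast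
  moreover have "finite B" using fin BA finite_subset by blast
  ultimately have gB: "g ` B = B" using endo_inj_surj[of B g] by simp
  have "g b \<in> g ` B" using PB gB unfolding g_def by simp
  then obtain b' where b': "b' \<in> B" "g b = g b'" by blast
  have "b = b'" using inj_onD[OF injA b'(2) bA subsetD[OF BA b'(1)]] .
  then show ?thesis using b'(1) by simp
qed
end


lemma ex1_same: "\<exists>!z. P z \<Longrightarrow> P y \<Longrightarrow> P y' \<Longrightarrow> y = y'"
  by blast

theorem mainTheorem9:
  fixes A :: "'a set" and m :: "'a \<Rightarrow> 'a \<Rightarrow> 'a"
  assumes "finite A" and "quasigroup A m" and "abelian_alg A m"
  shows "hamiltonian_alg A m"
proof -
  have cl: "\<forall>a\<in>A. \<forall>b\<in>A. m a b \<in> A" using assms(2) unfolding quasigroup_def by (rule conjunct1)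
  have q: "\<forall>a\<in>A. \<forall>b\<in>A. (\<exists>!x. x \<in> A \<and> m x a = b) \<and> (\<exists>!y. y \<in> A \<and> m a y = b)"
    using assms(2) unfolding quasigroup_def by (rule conjunct2)
  have injL: "inj_on (m a) A" if a: "a \<in> A" for a
  proof (rule inj_onI)
    fix y y' assume y: "y \<in> A" and y': "y' \<in> A" and e: "m a y = m a y'"
    have "m a y \<in> A" using cl a y by blast
    have "\<exists>!z. z \<in> A \<and> m a z = m a y" using conjunct2[OF q[rule_format, OF a \<open>m a y \<in> A\<close>]] .
    then show "y = y'" by (rule ex1_same) (use y y' e in auto)
  qed
  have injR: "inj_on (\<lambda>z. m z a) A" if a: "a \<in> A" for a
  proof (rule inj_onI)
    fix y y' assume y: "y \<in> A" and y': "y' \<in> A" and e: "m y a = m y' a"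
    have "m y a \<in> A" using cl a y by blast
    have "\<exists>!z. z \<in> A \<and> m z a = m y a" using conjunct1[OF q[rule_format, OF a \<open>m y a \<in> A\<close>]] .
    then show "y = y'" by (rule ex1_same) (use y y' e in auto)
  qed
  have "\<forall>a\<in>A. \<exists>k>0. \<forall>y\<in>A. (m a ^^ k) y = y"
  proof
    fix a assume a: "a \<in> A"
    show "\<exists>k>0. \<forall>y\<in>A. (m a ^^ k) y = y"
      by (rule perm_period[OF assms(1)]) (use cl a injL[OF a] in auto)
  qed
  then obtain NL where NL: "NL > 0" "\<forall>a\<in>A. \<forall>y\<in>A. (m a ^^ NL) y = y"
    using uniform_period[OF assms(1), of m] by blast
  have "\<forall>a\<in>A. \<exists>k>0. \<forall>y\<in>A. ((\<lambda>z. m z a) ^^ k) y = y"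
  proof
    fix a assume a: "a \<in> A"
    show "\<exists>k>0. \<forall>y\<in>A. ((\<lambda>z. m z a) ^^ k) y = y"
      by (rule perm_period[OF assms(1)]) (use cl a injR[OF a] in auto)
  qed
  then obtain NR where NR: "NR > 0" "\<forall>a\<in>A. \<forall>y\<in>A. ((\<lambda>z. m z a) ^^ NR) y = y"
    using uniform_period[OF assms(1), of "\<lambda>a z. m z a"] by blast
  have L: "\<forall>a\<in>A. \<forall>y\<in>A. (m a ^^ (NL * NR)) y = y"
  proof (intro ballI)
    fix a y assume "a \<in> A" "y \<in> A"
    then show "(m a ^^ (NL * NR)) y = y" using fix_mult[where S=A and g="m a" and k=NL and q=NR] NL(2) by blast
  qed
  have R: "\<forall>a\<in>A. \<forall>y\<in>A. ((\<lambda>z. m z a) ^^ (NL * NR)) y = y"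
  proof (intro ballI)
    fix a y assume "a \<in> A" "y \<in> A"
    then have "((\<lambda>z. m z a) ^^ (NR * NL)) y = y"
      using fix_mult[where S=A and g="\<lambda>z. m z a" and k=NR and q=NL] NR(2) by blast
    then show "((\<lambda>z. m z a) ^^ (NL * NR)) y = y" by (simp add: mult.commute)
  qed
  have "NL * NR > 0" using NL(1) NR(1) by simp
  then interpret fq A m "NL * NR"
    using assms(1) cl L R by (intro fq.intro)
  show ?thesis unfolding hamiltonian_alg_def
  proof (intro allI impI)
    fix B assume sub: "subalgebra A m B"
    then obtain b0 where b0: "b0 \<in> B" and BA: "B \<subseteq> A" unfolding subalgebra_def by blast
    have "B = rel B `` {b0}"
    proof
      show "rel B `` {b0} \<subseteq> B" using block[OF assms(3) sub _ b0] by blast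
      show "B \<subseteq> rel B `` {b0}"
      proof
        fix b assume bB: "b \<in> B"
        have "(b0, b) \<in> rel B" unfolding rel_def mem_Collect_eq prod.case
          apply (rule_tac exI[of _ "Var 0"], rule_tac exI[of _ "{0}"], rule_tac exI[of _ "\<lambda>_. b0"],
             rule_tac exI[of _ "(\<lambda>_. b0)(0 := b)"])
          using b0 bB BA by auto
        then show "b \<in> rel B `` {b0}" by blast
      qed
    qed
    moreover have "rel B `` {b0} \<in> A // rel B" using b0 BA by (intro quotientI) auto
    ultimately have "B \<in> A // rel B" by simp
    then show "\<exists>\<theta>. congruence A m \<theta> \<and> B \<in> A // \<theta>" using rel_congruence by blast
  qed
qed

end
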